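(* There exist symmetric pseudo-Boolean functions of $n$ variables for which any $y$-linear quadratization must involve at least $\Omega(n/\log n)$ auxiliary variables; that is, there is a constant $c>0$ such that for infinitely many $n$ there is a symmetric $f:\{0,1\}^n\to\mathbb{R}$ every $y$-linear quadratization of which uses at least $c\,n/\log n$ auxiliary variables.
   Context: A pseudo-Boolean function is a map $\{0,1\}^n\to\mathbb{R}$; it is symmetric if its value depends only on the Hamming weight. A quadratization of $f$ using $m$ auxiliary variables is a polynomial $g(x,y)$ of degree at most $2$ in $x_1,\ldots,x_n,y_1,\ldots,y_m$ such that $f(x)=\min\{g(x,y):y\in\{0,1\}^m\}$ for all $x\in\{0,1\}^n$. It is $y$-linear if it contains no product of two auxiliary variables, i.e. $g(x,y)=q(x)+\sum_{i=1}^m a_i(x)y_i$ with $q$ quadratic and each $a_i$ affine in $x$. *)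

theory Defs
  imports Complex_Main
begin

text \<open>Points of the Boolean cube {0,1}^n, represented as functions nat => bool that are
  False outside the index range {0..<n}.\<close>
definition bvecs :: "nat \<Rightarrow> (nat \<Rightarrow> bool) set" where
  "bvecs n = {x. \<forall>j\<ge>n. \<not> x j}"

text \<open>A pseudo-Boolean function of n variables is f :: (nat => bool) => real, only its
  values on bvecs n matter. Symmetric: value depends only on the Hamming weight.\<close>
definition symmetric_pbf :: "nat \<Rightarrow> ((nat \<Rightarrow> bool) \<Rightarrow> real) \<Rightarrow> bool" where
  "symmetric_pbf n f \<longleftrightarrow>
     (\<forall>x\<in>bvecs n. \<forall>x'\<in>bvecs n. card {j. j < n \<and> x j} = card {j. j < n \<and> x' j} \<longrightarrow> f x = f x')"

definition ylin_poly ::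
  "nat \<Rightarrow> nat \<Rightarrow> real \<Rightarrow> (nat \<Rightarrow> real) \<Rightarrow> (nat \<Rightarrow> nat \<Rightarrow> real) \<Rightarrow> (nat \<Rightarrow> real) \<Rightarrow> (nat \<Rightarrow> nat \<Rightarrow> real)
   \<Rightarrow> (nat \<Rightarrow> bool) \<Rightarrow> (nat \<Rightarrow> bool) \<Rightarrow> real" where
  "ylin_poly n m c b d a0 a x y =
     c + (\<Sum>j<n. b j * of_bool (x j))
       + (\<Sum>j<n. \<Sum>k<n. d j k * of_bool (x j) * of_bool (x k))
       + (\<Sum>i<m. (a0 i + (\<Sum>j<n. a i j * of_bool (x j))) * of_bool (y i))"

definition has_ylin_quadratization :: "nat \<Rightarrow> nat \<Rightarrow> ((nat \<Rightarrow> bool) \<Rightarrow> real) \<Rightarrow> bool" where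
  "has_ylin_quadratization n m f \<longleftrightarrow>
     (\<exists>c b d a0 a. \<forall>x\<in>bvecs n.
        f x = Min ((\<lambda>y. ylin_poly n m c b d a0 a x y) ` bvecs m))"

end

theory Submission imports Defs "HOL-Library.Function_Algebras" "HOL-Library.Discrete_Functions" "HOL-Computational_Algebra.Polynomial"
begin

interpretation fvs: vector_space "\<lambda>(c::real) (f::(nat\<Rightarrow>bool)\<Rightarrow>real). (\<lambda>z. c * f z)"
  by unfold_locales (auto simp: algebra_simps fun_eq_iff plus_fun_def)

lemma sum_fun_apply: "finite A \<Longrightarrow> (\<Sum>i\<in>A. (g i :: 'a \<Rightarrow> 'b::comm_monoid_add)) z = (\<Sum>i\<in>A. g i z)"
  by (induction A rule: finite_induct) (auto simp: plus_fun_def zero_fun_def)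

lemma finite_bvecs: "finite (bvecs m)"
proof -
  have "bvecs m \<subseteq> (\<lambda>S j. j \<in> S) ` Pow {..<m}"
  proof
    fix x assume x: "x \<in> bvecs m"
    have "x = (\<lambda>j. j \<in> {j. j < m \<and> x j})" using x by (auto simp: bvecs_def fun_eq_iff) (meson leI)
    then show "x \<in> (\<lambda>S j. j \<in> S) ` Pow {..<m}" by blast
  qed
  then show ?thesis by (rule finite_subset) auto
qed

lemma Min_lin:
  fixes A :: "nat \<Rightarrow> real"
  shows "Min ((\<lambda>y. K + (\<Sum>i<m. A i * of_bool (y i))) ` bvecs m) = K + (\<Sum>i<m. min 0 (A i))"
proof (rule Min_eqI)
  show "finite ((\<lambda>y. K + (\<Sum>i<m. A i * of_bool (y i))) ` bvecs m)" using finite_bvecs by simp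
next
  fix v assume "v \<in> (\<lambda>y. K + (\<Sum>i<m. A i * of_bool (y i))) ` bvecs m"
  then obtain y where v: "v = K + (\<Sum>i<m. A i * of_bool (y i))" by auto
  have "(\<Sum>i<m. min 0 (A i)) \<le> (\<Sum>i<m. A i * of_bool (y i))"
    by (rule sum_mono) auto
  then show "K + (\<Sum>i<m. min 0 (A i)) \<le> v" using v by simp
next
  let ?y = "\<lambda>i. i < m \<and> A i < 0"
  have y: "?y \<in> bvecs m" by (auto simp: bvecs_def)
  have e: "(\<Sum>i<m. A i * of_bool (?y i)) = (\<Sum>i<m. min 0 (A i))"
    by (rule sum.cong) auto
  show "K + (\<Sum>i<m. min 0 (A i)) \<in> (\<lambda>y. K + (\<Sum>i<m. A i * of_bool (y i))) ` bvecs m"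
    by (rule rev_image_eqI[OF y]) (simp only: e)
qed

definition wsum :: "nat \<Rightarrow> (nat \<Rightarrow> bool) \<Rightarrow> nat" where
  "wsum r z = (\<Sum>s<r. of_bool (z s) * 2^s)"

definition emb :: "nat \<Rightarrow> (nat \<Rightarrow> bool) \<Rightarrow> nat \<Rightarrow> bool" where
  "emb r z = (\<lambda>j. 0 < j \<and> j < 2^r \<and> z (floor_log j))"

lemma emb_bvecs: "emb r z \<in> bvecs (2^r)"
  by (auto simp: emb_def bvecs_def)

lemma fl_bounds: "0 < j \<Longrightarrow> 2 ^ floor_log j \<le> j \<and> j < 2 ^ Suc (floor_log j)"
  using floor_log_exp2_le floor_log_exp2_gt by auto

lemma wt: assumes "z \<in> bvecs r"
  shows "card {j. j < 2^r \<and> emb r z j} = wsum r z"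
proof -
  have eq: "{j. j < 2^r \<and> emb r z j} = (\<Union>s\<in>{s. s < r \<and> z s}. {2^s..<2^Suc s})"
  proof safe
    fix j assume j: "j < 2^r" "emb r z j"
    let ?s = "floor_log j"
    have "0 < j" "z ?s" using j by (auto simp: emb_def)
    with fl_bounds[of j] have b: "2 ^ ?s \<le> j" "j < 2 ^ Suc ?s" by auto
    have "?s < r" using b j(1) by (metis le_less_trans power_less_imp_less_exp one_less_numeral_iff semiring_norm(76))
    then show "j \<in> (\<Union>s\<in>{s. s < r \<and> z s}. {2^s..<2^Suc s})" using b \<open>z ?s\<close> by auto
  next
    fix j s :: nat assume a: "s < r" "z s" "j \<in> {2^s..<2^Suc s}"
    have "2^Suc s \<le> (2::nat)^r" using a(1) by (intro power_increasing) auto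
    then show "j < 2^r" using a by auto
    have "floor_log j = s" using a by (intro floor_log_eqI) auto
    moreover have "0 < j" using a(3) by (auto intro: order.strict_trans2[of 0 "2^s"])
    ultimately show "emb r z j" using a \<open>j < 2^r\<close> by (auto simp: emb_def)
  qed
  have "card (\<Union>s\<in>{s. s < r \<and> z s}. {(2::nat)^s..<2^Suc s}) = (\<Sum>s\<in>{s. s < r \<and> z s}. card {(2::nat)^s..<2^Suc s})"
  proof (rule card_UN_disjoint)
    show "\<forall>i\<in>{s. s < r \<and> z s}. \<forall>j\<in>{s. s < r \<and> z s}. i \<noteq> j \<longrightarrow> {(2::nat)^i..<2^Suc i} \<inter> {2^j..<2^Suc j} = {}"
    proof (intro ballI impI)
      fix i j :: nat assume "i \<noteq> j"
      show "{(2::nat)^i..<2^Suc i} \<inter> {2^j..<2^Suc j} = {}"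
      proof (rule ccontr)
        assume "{(2::nat)^i..<2^Suc i} \<inter> {2^j..<2^Suc j} \<noteq> {}"
        then obtain x where x: "x \<in> {(2::nat)^i..<2^Suc i}" "x \<in> {2^j..<2^Suc j}" by blast
        have "floor_log x = i" using x by (intro floor_log_eqI) auto
        moreover have "floor_log x = j" using x by (intro floor_log_eqI) auto
        ultimately show False using \<open>i \<noteq> j\<close> by simp
      qed
    qed
  qed simp_all
  also have "\<dots> = (\<Sum>s\<in>{s. s < r \<and> z s}. 2^s)" by simp
  also have "\<dots> = (\<Sum>s\<in>{s\<in>{..<r}. z s}. 2^s)" by (rule sum.cong) auto
  also have "\<dots> = (\<Sum>s<r. if z s then 2^s else 0)" by (rule sum.inter_filter) simp
  also have "\<dots> = wsum r z" unfolding wsum_def by (rule sum.cong) auto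
  finally show ?thesis by (simp only: eq)
qed

lemma wsum_surj: assumes "k < 2^r" shows "\<exists>z\<in>bvecs r. wsum r z = k"
  using assms
proof (induction r arbitrary: k)
  case 0 then show ?case by (auto simp: bvecs_def wsum_def)
next
  case (Suc r)
  show ?case
  proof (cases "k < 2^r")
    case True
    then obtain z where z: "z \<in> bvecs r" "wsum r z = k" using Suc.IH by blast
    then have "z \<in> bvecs (Suc r)" "\<not> z r" by (auto simp: bvecs_def)
    moreover have "wsum (Suc r) z = wsum r z" using \<open>\<not> z r\<close> by (simp add: wsum_def)
    ultimately show ?thesis using z by blast
  next
    case False
    then have "k - 2^r < 2^r" using Suc.prems by auto
    then obtain z where z: "z \<in> bvecs r" "wsum r z = k - 2^r" using Suc.IH by blast
    let ?z = "z(r := True)"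
    have "?z \<in> bvecs (Suc r)" using z by (auto simp: bvecs_def)
    moreover have "wsum (Suc r) ?z = wsum r z + 2^r"
      unfolding wsum_def by (auto intro!: sum.cong)
    moreover have "wsum r z + 2^r = k" using z(2) False by simp
    ultimately show ?thesis by metis
  qed
qed


definition R :: "nat \<Rightarrow> ((nat\<Rightarrow>bool)\<Rightarrow>real) \<Rightarrow> (nat\<Rightarrow>bool) \<Rightarrow> real" where
  "R r h = (\<lambda>z. if z \<in> bvecs r then h z else 0)"

definition ft :: "nat \<Rightarrow> real \<Rightarrow> (nat\<Rightarrow>bool) \<Rightarrow> real" where
  "ft r t x = t ^ card {j. j < 2^r \<and> x j}"

definition Gt :: "nat \<Rightarrow> real \<Rightarrow> (nat\<Rightarrow>bool) \<Rightarrow> real" where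
  "Gt r t = R r (\<lambda>z. ft r t (emb r z))"

lemma Gt_eval: "z \<in> bvecs r \<Longrightarrow> Gt r t z = t ^ wsum r z"
  by (simp add: Gt_def R_def ft_def wt)

lemma vander:
  fixes c :: "real \<Rightarrow> real"
  assumes fin: "finite T" and cT: "card T \<le> N" and van: "\<forall>k<N. (\<Sum>t\<in>T. c t * t^k) = 0" and t0: "t0 \<in> T"
  shows "c t0 = 0"
proof -
  define p where "p = (\<Prod>u\<in>T-{t0}. [:-u,1:])"
  have "degree p \<le> (\<Sum>u\<in>T-{t0}. degree [:-u,1:])"
    unfolding p_def using degree_prod_sum_le[of "T-{t0}" "\<lambda>u. [:-u,1:]"] fin by (simp add: o_def)
  also have "\<dots> = card (T - {t0})" by simp
  also have "\<dots> < N" using fin t0 cT by (metis card_Diff1_less le_less_trans linorder_not_le order.strict_trans2)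
  finally have deg: "degree p < N" .
  have "(\<Sum>t\<in>T. c t * poly p t) = (\<Sum>t\<in>T. c t * (\<Sum>k\<le>degree p. coeff p k * t^k))"
    by (simp add: poly_altdef)
  also have "\<dots> = (\<Sum>t\<in>T. \<Sum>k\<le>degree p. coeff p k * (c t * t^k))"
    by (simp add: sum_distrib_left mult_ac)
  also have "\<dots> = (\<Sum>k\<le>degree p. \<Sum>t\<in>T. coeff p k * (c t * t^k))"
    by (rule sum.swap)
  also have "\<dots> = (\<Sum>k\<le>degree p. coeff p k * (\<Sum>t\<in>T. c t * t^k))"
    by (simp add: sum_distrib_left)
  also have "\<dots> = 0" using van deg by (intro sum.neutral) auto
  finally have s0: "(\<Sum>t\<in>T. c t * poly p t) = 0" .
  have pv: "poly p t = (\<Prod>u\<in>T-{t0}. t - u)" for t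
    unfolding p_def by (simp add: poly_prod)
  have "(\<Sum>t\<in>T. c t * poly p t) = c t0 * poly p t0 + (\<Sum>t\<in>T-{t0}. c t * poly p t)"
    using fin t0 by (simp add: sum.remove)
  also have "(\<Sum>t\<in>T-{t0}. c t * poly p t) = 0"
  proof (rule sum.neutral, rule ballI)
    fix t assume t: "t \<in> T - {t0}"
    have "poly p t = 0" unfolding pv using fin t by (auto intro: prod_zero)
    then show "c t * poly p t = 0" by simp
  qed
  finally have "c t0 * poly p t0 = 0" using s0 by simp
  moreover have "poly p t0 \<noteq> 0" unfolding pv using fin by (simp add: prod_zero_iff)
  ultimately show ?thesis by simp
qed

lemma Gt_inj: assumes "r \<ge> 1" shows "inj_on (Gt r) T"
proof -
  have "(2::nat)^1 \<le> 2^r" using assms by (intro power_increasing) auto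
  then have "1 < (2::nat)^r" by simp
  then obtain z where z: "z \<in> bvecs r" "wsum r z = 1" using wsum_surj by blast
  show ?thesis
  proof (rule inj_onI)
    fix s t assume "Gt r s = Gt r t"
    then have "Gt r s z = Gt r t z" by simp
    then show "s = t" using z by (simp add: Gt_eval)
  qed
qed

lemma Gt_indep: assumes r: "r \<ge> 1" and fin: "finite T" and cT: "card T \<le> 2^r"
  shows "fvs.independent (Gt r ` T)"
proof (rule fvs.independent_if_scalars_zero)
  show "finite (Gt r ` T)" using fin by simp
next
  fix f x assume sum0: "(\<Sum>x\<in>Gt r ` T. (\<lambda>z. f x * x z)) = 0" and x: "x \<in> Gt r ` T"
  have inj: "inj_on (Gt r) T" using Gt_inj r by blast
  have sum0': "(\<Sum>t\<in>T. (\<lambda>z. f (Gt r t) * Gt r t z)) = 0"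
    using sum0 by (simp add: sum.reindex[OF inj])
  have van: "\<forall>k<2^r. (\<Sum>t\<in>T. f (Gt r t) * t^k) = 0"
  proof (intro allI impI)
    fix k :: nat assume "k < 2^r"
    then obtain z where z: "z \<in> bvecs r" "wsum r z = k" using wsum_surj by blast
    have "(\<Sum>t\<in>T. (\<lambda>z. f (Gt r t) * Gt r t z)) z = 0" using sum0' by simp
    then show "(\<Sum>t\<in>T. f (Gt r t) * t^k) = 0" using z fin by (simp add: sum_fun_apply Gt_eval)
  qed
  from x obtain t where t: "t \<in> T" "x = Gt r t" by blast
  show "f x = 0" using vander[of T "2^r" "\<lambda>t. f (Gt r t)" t, OF fin cT van t(1)] t by simp
qed

lemma finite_bad: assumes r: "r \<ge> 1" and X: "finite X" "card X < 2^r"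
  shows "finite {t. Gt r t \<in> fvs.span X}"
proof (rule ccontr)
  assume "infinite {t. Gt r t \<in> fvs.span X}"
  then obtain T where T: "T \<subseteq> {t. Gt r t \<in> fvs.span X}" "finite T" "card T = 2^r"
    using infinite_arbitrarily_large by blast
  have ind: "fvs.independent (Gt r ` T)" using Gt_indep[OF r T(2)] T(3) by simp
  have "Gt r ` T \<subseteq> fvs.span X" using T(1) by blast
  then have "card (Gt r ` T) \<le> card X" using fvs.independent_span_bound[OF X(1) ind] by blast
  moreover have "card (Gt r ` T) = 2^r" using card_image[OF Gt_inj[OF r]] T(3) by simp
  ultimately show False using X(2) by simp
qed


definition Qs :: "nat \<Rightarrow> ((nat\<Rightarrow>bool)\<Rightarrow>real) set" where
  "Qs r = insert (R r (\<lambda>z. 1)) ((\<lambda>s. R r (\<lambda>z. of_bool (z s))) ` {..<r} \<union>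
      (\<lambda>(s,s'). R r (\<lambda>z. of_bool (z s) * of_bool (z s'))) ` ({..<r} \<times> {..<r}))"

definition Ls :: "nat \<Rightarrow> (nat\<Rightarrow>bool) set \<Rightarrow> ((nat\<Rightarrow>bool)\<Rightarrow>real) set" where
  "Ls r S = insert (R r (\<lambda>z. of_bool (z \<in> S))) ((\<lambda>s. R r (\<lambda>z. of_bool (z \<in> S) * of_bool (z s))) ` {..<r})"

definition Bs :: "nat \<Rightarrow> nat \<Rightarrow> (nat\<Rightarrow>bool) set list \<Rightarrow> ((nat\<Rightarrow>bool)\<Rightarrow>real) set" where
  "Bs r m ps = Qs r \<union> (\<Union>i<m. Ls r (ps ! i))"

definition PatSet :: "nat \<Rightarrow> nat \<Rightarrow> (nat\<Rightarrow>bool) set list set" where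
  "PatSet r m = {ps. set ps \<subseteq> Pow (bvecs r) \<and> length ps = m}"

lemma finite_PatSet: "finite (PatSet r m)"
  unfolding PatSet_def by (rule finite_lists_length_eq) (simp add: finite_bvecs)

lemma Bs_finite: "finite (Bs r m ps)"
  by (simp add: Bs_def Qs_def Ls_def)

lemma card_Bs: "card (Bs r m ps) \<le> (r+1)^2 + m*(r+1)"
proof -
  have cQ: "card (Qs r) \<le> 1 + r + r*r"
  proof -
    have "card (Qs r) \<le> 1 + card ((\<lambda>s. R r (\<lambda>z. of_bool (z s))) ` {..<r} \<union>
      (\<lambda>(s,s'). R r (\<lambda>z. of_bool (z s) * of_bool (z s'))) ` ({..<r} \<times> {..<r}))"
      unfolding Qs_def by (simp add: card_insert_le_m1)
    also have "\<dots> \<le> 1 + (card ((\<lambda>s. R r (\<lambda>z. of_bool (z s))) ` {..<r}) +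
       card ((\<lambda>(s,s'). R r (\<lambda>z. of_bool (z s) * of_bool (z s'))) ` ({..<r} \<times> {..<r})))"
      using card_Un_le by simp
    also have "\<dots> \<le> 1 + (r + r*r)"
      using card_image_le[of "{..<r}" "\<lambda>s. R r (\<lambda>z. of_bool (z s))"]
            card_image_le[of "{..<r} \<times> {..<r}" "\<lambda>(s,s'). R r (\<lambda>z. of_bool (z s) * of_bool (z s'))"]
      by (simp add: card_cartesian_product)
    finally show ?thesis by simp
  qed
  have cL: "card (Ls r S) \<le> r + 1" for S
  proof -
    have "card (Ls r S) \<le> Suc (card ((\<lambda>s. R r (\<lambda>z. of_bool (z \<in> S) * of_bool (z s))) ` {..<r}))"
      unfolding Ls_def by (rule card_insert_le_m1) simp_all
    also have "\<dots> \<le> Suc r" using card_image_le[of "{..<r}"] by simp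
    finally show ?thesis by simp
  qed
  have "card (Bs r m ps) \<le> card (Qs r) + card (\<Union>i<m. Ls r (ps ! i))"
    unfolding Bs_def by (rule card_Un_le)
  also have "card (\<Union>i<m. Ls r (ps ! i)) \<le> (\<Sum>i<m. card (Ls r (ps ! i)))"
    by (rule card_UN_le) simp
  also have "\<dots> \<le> (\<Sum>i<m. r + 1)" by (rule sum_mono) (rule cL)
  finally show ?thesis using cQ by (simp add: power2_eq_square algebra_simps)
qed

lemma R_cong: "(\<And>z. z \<in> bvecs r \<Longrightarrow> g z = h z) \<Longrightarrow> R r g = R r h"
  by (auto simp: R_def fun_eq_iff)

lemma R_zero: "R r (\<lambda>z. 0) = 0"
  by (simp add: R_def fun_eq_iff)

lemma sp_add: "R r g \<in> fvs.span X \<Longrightarrow> R r h \<in> fvs.span X \<Longrightarrow> R r (\<lambda>z. g z + h z) \<in> fvs.span X"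
proof -
  assume a: "R r g \<in> fvs.span X" "R r h \<in> fvs.span X"
  have "R r (\<lambda>z. g z + h z) = R r g + R r h" by (simp add: R_def fun_eq_iff)
  then show ?thesis using fvs.span_add[OF a] by simp
qed

lemma sp_scale: "R r g \<in> fvs.span X \<Longrightarrow> R r (\<lambda>z. c * g z) \<in> fvs.span X"
proof -
  assume a: "R r g \<in> fvs.span X"
  have "R r (\<lambda>z. c * g z) = (\<lambda>z. c * R r g z)" by (simp add: R_def fun_eq_iff)
  then show ?thesis using fvs.span_scale[OF a, of c] by simp
qed

lemma sp_sum: "finite J \<Longrightarrow> (\<And>j. j \<in> J \<Longrightarrow> R r (g j) \<in> fvs.span X) \<Longrightarrow> R r (\<lambda>z. \<Sum>j\<in>J. g j z) \<in> fvs.span X"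
proof (induction J rule: finite_induct)
  case empty
  have eq: "R r (\<lambda>z. \<Sum>j\<in>{}. g j z) = 0" by (simp add: R_def zero_fun_def)
  show ?case by (simp only: eq fvs.span_zero)
next
  case (insert x F)
  have "R r (\<lambda>z. \<Sum>j\<in>insert x F. g j z) = R r (\<lambda>z. g x z + (\<Sum>j\<in>F. g j z))"
    using insert(1,2) by simp
  moreover have "R r (\<lambda>z. g x z + (\<Sum>j\<in>F. g j z)) \<in> fvs.span X"
    by (rule sp_add) (use insert in auto)
  ultimately show ?case by simp
qed

lemma sp_base: "R r g \<in> X \<Longrightarrow> R r g \<in> fvs.span X"
  by (rule fvs.span_base)

lemma emb_j: "0 < j \<Longrightarrow> j < 2^r \<Longrightarrow> floor_log j < r \<and> (\<forall>z. emb r z j = z (floor_log j))"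
proof -
  assume j: "0 < j" "j < 2^r"
  have "(2::nat) ^ floor_log j \<le> j" using j(1) floor_log_exp2_le by blast
  then have "(2::nat) ^ floor_log j < 2^r" using j(2) by linarith
  then have "floor_log j < r" by (simp add: power_strict_increasing_iff)
  then show ?thesis using j by (simp add: emb_def)
qed

lemma emb_0: "emb r z 0 = False"
  by (simp add: emb_def)


lemma K3: assumes q: "has_ylin_quadratization (2^r) m (ft r t)"
  shows "\<exists>ps\<in>PatSet r m. Gt r t \<in> fvs.span (Bs r m ps)"
proof -
  obtain c b d a0 a where H: "\<forall>x\<in>bvecs (2^r). ft r t x = Min ((\<lambda>y. ylin_poly (2^r) m c b d a0 a x y) ` bvecs m)"
    using q unfolding has_ylin_quadratization_def by blast
  define n where "n = (2::nat)^r"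
  define A where "A = (\<lambda>i x. a0 i + (\<Sum>j<n. a i j * of_bool (x j)))"
  define P where "P = (\<lambda>i. {z\<in>bvecs r. A i (emb r z) < 0})"
  define ps where "ps = map P [0..<m]"
  have ps: "ps \<in> PatSet r m" by (auto simp: ps_def PatSet_def P_def)
  have psi: "ps ! i = P i" if "i < m" for i using that by (simp add: ps_def)
  define X where "X = (\<lambda>j z. (of_bool (emb r z j) :: real))"
  define I where "I = (\<lambda>i z. (of_bool (z \<in> P i) :: real))"
  define E where "E = (\<lambda>z. c * 1 + (\<Sum>j<n. b j * X j z) + (\<Sum>j<n. \<Sum>k<n. d j k * (X j z * X k z))
      + (\<Sum>i<m. a0 i * I i z + (\<Sum>j<n. a i j * (I i z * X j z))))"
  let ?B = "Bs r m ps"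
  have eq: "Gt r t = R r E"
    unfolding Gt_def
  proof (rule R_cong)
    fix z assume z: "z \<in> bvecs r"
    let ?x = "emb r z"
    have "ft r t ?x = Min ((\<lambda>y. ylin_poly n m c b d a0 a ?x y) ` bvecs m)"
      using H emb_bvecs n_def by simp
    also have "(\<lambda>y. ylin_poly n m c b d a0 a ?x y) = (\<lambda>y. (c + (\<Sum>j<n. b j * of_bool (?x j))
         + (\<Sum>j<n. \<Sum>k<n. d j k * of_bool (?x j) * of_bool (?x k))) + (\<Sum>i<m. A i ?x * of_bool (y i)))"
      by (simp add: ylin_poly_def A_def fun_eq_iff)
    also have "Min ((\<lambda>y. (c + (\<Sum>j<n. b j * of_bool (?x j))
         + (\<Sum>j<n. \<Sum>k<n. d j k * of_bool (?x j) * of_bool (?x k))) + (\<Sum>i<m. A i ?x * of_bool (y i))) ` bvecs m)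
       = (c + (\<Sum>j<n. b j * of_bool (?x j))
         + (\<Sum>j<n. \<Sum>k<n. d j k * of_bool (?x j) * of_bool (?x k))) + (\<Sum>i<m. min 0 (A i ?x))"
      by (rule Min_lin)
    also have "(\<Sum>i<m. min 0 (A i ?x)) = (\<Sum>i<m. a0 i * I i z + (\<Sum>j<n. a i j * (I i z * X j z)))"
    proof (rule sum.cong)
      fix i
      have "min 0 (A i ?x) = I i z * A i ?x" using z by (auto simp: I_def P_def min_def)
      also have "\<dots> = a0 i * I i z + (\<Sum>j<n. a i j * (I i z * X j z))"
        unfolding A_def X_def by (simp only: distrib_left sum_distrib_left mult.assoc mult.commute mult.left_commute)
      finally show "min 0 (A i ?x) = a0 i * I i z + (\<Sum>j<n. a i j * (I i z * X j z))" .
    qed simp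
    also have "(\<Sum>j<n. \<Sum>k<n. d j k * of_bool (?x j) * of_bool (?x k)) = (\<Sum>j<n. \<Sum>k<n. d j k * (X j z * X k z))"
      by (simp add: X_def mult_ac)
    finally show "ft r t ?x = E z" by (simp add: E_def X_def)
  qed
  have BQ: "Qs r \<subseteq> ?B" by (simp add: Bs_def)
  have BL: "Ls r (P i) \<subseteq> ?B" if "i < m" for i using that psi by (auto simp: Bs_def)
  have m1: "R r (\<lambda>z. 1) \<in> fvs.span ?B"
    by (rule fvs.span_base) (use BQ in \<open>auto simp: Qs_def\<close>)
  have mX: "R r (X j) \<in> fvs.span ?B" if j: "j < n" for j
  proof (cases "j = 0")
    case True
    then have "X j = (\<lambda>z. 0)" by (simp add: X_def emb_0 fun_eq_iff)
    then show ?thesis using R_zero fvs.span_zero by simp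
  next
    case False
    then have e: "floor_log j < r" "\<forall>z. emb r z j = z (floor_log j)" using emb_j[of j r] j n_def by auto
    then have "X j = (\<lambda>z. of_bool (z (floor_log j)))" by (simp add: X_def fun_eq_iff)
    moreover have "R r (\<lambda>z. of_bool (z (floor_log j))) \<in> Qs r" using e(1) by (auto simp: Qs_def)
    ultimately show ?thesis using BQ fvs.span_base by auto
  qed
  have mXX: "R r (\<lambda>z. X j z * X k z) \<in> fvs.span ?B" if j: "j < n" "k < n" for j k
  proof (cases "j = 0 \<or> k = 0")
    case True
    then have "(\<lambda>z. X j z * X k z) = (\<lambda>z. 0)" by (auto simp: X_def emb_0 fun_eq_iff)
    then show ?thesis using R_zero fvs.span_zero by simp
  next
    case False
    then have e: "floor_log j < r" "\<forall>z. emb r z j = z (floor_log j)"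
       "floor_log k < r" "\<forall>z. emb r z k = z (floor_log k)" using emb_j[of j r] emb_j[of k r] j n_def by auto
    then have "(\<lambda>z. X j z * X k z) = (\<lambda>z. of_bool (z (floor_log j)) * of_bool (z (floor_log k)))" by (simp add: X_def fun_eq_iff)
    moreover have "R r (\<lambda>z. of_bool (z (floor_log j)) * of_bool (z (floor_log k))) \<in> Qs r"
      using e(1,3) unfolding Qs_def by (intro insertI2 UnI2) (auto intro!: image_eqI[where x="(floor_log j, floor_log k)"])
    ultimately show ?thesis using BQ fvs.span_base by auto
  qed
  have mI: "R r (I i) \<in> fvs.span ?B" if i: "i < m" for i
  proof -
    have "R r (I i) \<in> Ls r (P i)" by (simp add: Ls_def I_def)
    then show ?thesis using BL[OF i] fvs.span_base by auto
  qed
  have mIX: "R r (\<lambda>z. I i z * X j z) \<in> fvs.span ?B" if i: "i < m" and j: "j < n" for i j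
  proof (cases "j = 0")
    case True
    then have "(\<lambda>z. I i z * X j z) = (\<lambda>z. 0)" by (auto simp: X_def emb_0 fun_eq_iff)
    then show ?thesis using R_zero fvs.span_zero by simp
  next
    case False
    then have e: "floor_log j < r" "\<forall>z. emb r z j = z (floor_log j)" using emb_j[of j r] j n_def by auto
    then have "(\<lambda>z. I i z * X j z) = (\<lambda>z. of_bool (z \<in> P i) * of_bool (z (floor_log j)))" by (simp add: X_def I_def fun_eq_iff)
    moreover have "R r (\<lambda>z. of_bool (z \<in> P i) * of_bool (z (floor_log j))) \<in> Ls r (P i)" using e(1) by (auto simp: Ls_def)
    ultimately show ?thesis using BL[OF i] fvs.span_base by auto
  qed
  have s1: "R r (\<lambda>z. c * 1) \<in> fvs.span ?B" by (rule sp_scale[OF m1])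
  have s2: "R r (\<lambda>z. \<Sum>j<n. b j * X j z) \<in> fvs.span ?B"
    by (rule sp_sum) (auto intro!: sp_scale mX)
  have s3: "R r (\<lambda>z. \<Sum>j<n. \<Sum>k<n. d j k * (X j z * X k z)) \<in> fvs.span ?B"
    by (rule sp_sum) (auto intro!: sp_sum sp_scale mXX)
  have s4: "R r (\<lambda>z. \<Sum>i<m. a0 i * I i z + (\<Sum>j<n. a i j * (I i z * X j z))) \<in> fvs.span ?B"
    by (rule sp_sum) (auto intro!: sp_add sp_sum sp_scale mIX mI)
  have "R r E \<in> fvs.span ?B"
    unfolding E_def by (rule sp_add[OF sp_add[OF sp_add[OF s1 s2] s3] s4])
  then have "Gt r t \<in> fvs.span ?B" by (simp only: eq)
  with ps show ?thesis by (rule rev_bexI)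
qed

lemma finite_quad: assumes r: "r \<ge> 1" and mr: "(r+1)^2 + m*(r+1) < 2^r"
  shows "finite {t. has_ylin_quadratization (2^r) m (ft r t)}"
proof -
  have "{t. has_ylin_quadratization (2^r) m (ft r t)} \<subseteq> (\<Union>ps\<in>PatSet r m. {t. Gt r t \<in> fvs.span (Bs r m ps)})"
    using K3 by blast
  moreover have "finite (\<Union>ps\<in>PatSet r m. {t. Gt r t \<in> fvs.span (Bs r m ps)})"
  proof (rule finite_UN_I)
    show "finite (PatSet r m)" by (rule finite_PatSet)
    fix ps
    show "finite {t. Gt r t \<in> fvs.span (Bs r m ps)}"
      using finite_bad[OF r Bs_finite] card_Bs[of r m ps] mr by (meson le_less_trans)
  qed
  ultimately show ?thesis by (rule finite_subset)
qed


lemma pow_bound: "r \<ge> 7 \<Longrightarrow> 2 * (r+1)^2 \<le> (2::nat)^r"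
proof (induction r rule: dec_induct)
  case base then show ?case by simp
next
  case (step k)
  have "2 * (Suc k + 1)^2 = 2 * (k+1)^2 + 4*k + 6" by (simp add: power2_eq_square algebra_simps)
  also have "\<dots> \<le> 2 * (k+1)^2 + 2 * (k+1)^2" using step(1) mult_le_mono[of 7 k 7 k] by (simp add: power2_eq_square algebra_simps)
  also have "\<dots> \<le> 2^k + 2^k" using step(3) by simp
  finally show ?case by simp
qed

lemma ln2_ge: "ln (2::real) \<ge> 1/2"
proof -
  have "ln (1/2::real) \<le> 1/2 - 1" by (rule ln_le_minus_one) simp
  moreover have "ln (1/2::real) = - ln 2" by (simp add: ln_div)
  ultimately show ?thesis by simp
qed

lemma numeric:
  assumes r: "r \<ge> 7" and h: "(2::nat)^r \<le> (r+1)^2 + m*(r+1)"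
  shows "real m \<ge> (1/8) * real (2^r) / ln (real (2^r))"
proof -
  have pb: "2 * (r+1)^2 \<le> (2::nat)^r" using pow_bound r by blast
  have "2^r \<le> 2 * (m*(r+1))" using h pb by linarith
  then have h2: "real (2^r) \<le> 2 * (real m * (real r + 1))"
    by (metis of_nat_le_iff of_nat_mult of_nat_Suc of_nat_numeral Suc_eq_plus1 add.commute of_nat_add of_nat_1)
  have L: "ln (real (2^r)) = real r * ln 2" by (simp add: ln_realpow)
  have Lge: "ln (real (2^r)) \<ge> real r / 2" using L ln2_ge r
    by (metis divide_real_def mult_left_mono of_nat_0_le_iff times_divide_eq_right mult.commute mult_1)
  have rpos: "real r \<ge> 7" using r by simp
  have Lpos: "ln (real (2^r)) > 0" using Lge rpos by linarith
  have "(1/8) * real (2^r) \<le> (1/4) * (real m * (real r + 1))" using h2 by simp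
  also have "\<dots> \<le> real m * (real r / 2)"
  proof -
    have "real r + 1 \<le> 2 * real r" using rpos by simp
    then have "real m * (real r + 1) \<le> real m * (2 * real r)" by (intro mult_left_mono) auto
    then show ?thesis by simp
  qed
  also have "\<dots> \<le> real m * ln (real (2^r))" by (intro mult_left_mono Lge) auto
  finally show ?thesis using Lpos by (simp add: pos_divide_le_eq)
qed

theorem theorem8:
  shows "\<exists>C::real. C > 0 \<and> (\<forall>N::nat. \<exists>n\<ge>N. \<exists>f.
           symmetric_pbf n f \<and>
           (\<forall>m. has_ylin_quadratization n m f \<longrightarrow> real m \<ge> C * real n / ln (real n)))"
proof (intro exI[of _ "1/8"] conjI allI)
  show "(0::real) < 1/8" by simp
  fix N :: nat
  define r where "r = N + 7"
  have r7: "r \<ge> 7" and r1: "r \<ge> 1" by (auto simp: r_def)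
  have "r < 2^r" by (rule less_exp)
  then have "N < 2^r" using r_def by linarith
  define Bad where "Bad = (\<Union>m\<in>{m. (r+1)^2 + m*(r+1) < 2^r}. {t. has_ylin_quadratization (2^r) m (ft r t)})"
  have "finite Bad"
    unfolding Bad_def
  proof (rule finite_UN_I)
    show "finite {m. (r+1)^2 + m*(r+1) < 2^r}"
    proof (rule finite_subset[of _ "{..<2^r}"])
      show "{m. (r+1)^2 + m*(r+1) < 2^r} \<subseteq> {..<2^r}"
      proof
        fix m assume "m \<in> {m. (r+1)^2 + m*(r+1) < 2^r}"
        then have a: "(r+1)^2 + m*(r+1) < 2^r" by simp
        have "m \<le> m*(r+1)" by simp
        then show "m \<in> {..<2^r}" using a by simp
      qed
    qed simp
  qed (auto intro: finite_quad[OF r1])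
  then obtain t where t: "t \<notin> Bad" using ex_new_if_finite[OF infinite_UNIV_char_0] by blast
  show "\<exists>n\<ge>N. \<exists>f. symmetric_pbf n f \<and>
           (\<forall>m. has_ylin_quadratization n m f \<longrightarrow> 1/8 * real n / ln (real n) \<le> real m)"
  proof (intro exI conjI allI impI)
    show "N \<le> 2^r" using \<open>N < 2^r\<close> by simp
    show "symmetric_pbf (2^r) (ft r t)" by (auto simp: symmetric_pbf_def ft_def)
    fix m assume q: "has_ylin_quadratization (2^r) m (ft r t)"
    then have "\<not> (r+1)^2 + m*(r+1) < 2^r" using t unfolding Bad_def by blast
    then have "(2::nat)^r \<le> (r+1)^2 + m*(r+1)" by simp
    from numeric[OF r7 this] show "1/8 * real (2^r) / ln (real (2^r)) \<le> real m" by simp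
  qed
qed

end
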